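(* Let $\|\cdot\|$ be a norm on $\mathbb{B}(\mathcal{H})$ which is an $L$-norm or an $M$-norm. Then $\|EAE\|\le\|A\|$ for every (orthogonal) projection $E\in\mathbb{B}(\mathcal{H})$ and every $A\in\mathbb{B}(\mathcal{H})$.
   Context: $\mathbb{B}(\mathcal{H})$ is the algebra of bounded operators on a Hilbert space $\mathcal{H}$ with identity $I$. A norm $\|\cdot\|$ on $\mathbb{B}(\mathcal{H})$ is an $M$-norm if $\left\|\sum_{i=1}^k C_i^*X_iC_i\right\|\le \max_{1\le i\le k}\|X_i\|$ for all $k$, all $X_i\in\mathbb{B}(\mathcal{H})$ and all $C_i\in\mathbb{B}(\mathcal{H})$ with $\sum_{i=1}^k C_i^*C_i=I$. It is an $L$-norm if $\sum_{i=1}^k\|C_iXC_i^*\|\le\|X\|$ for all $k$, all $X\in\mathbb{B}(\mathcal{H})$ and all $C_i$ with $\sum_{i=1}^k C_i^*C_i=I$. *)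

theory Defs
  imports Complex_Main
begin

class chilbert_space = banach +
  fixes scaleC :: "complex \<Rightarrow> 'a \<Rightarrow> 'a"
    and cinner :: "'a \<Rightarrow> 'a \<Rightarrow> complex"
  assumes scaleC_add_right: "scaleC a (x + y) = scaleC a x + scaleC a y"
    and scaleC_add_left: "scaleC (a + b) x = scaleC a x + scaleC b x"
    and scaleC_scaleC: "scaleC a (scaleC b x) = scaleC (a * b) x"
    and scaleC_one: "scaleC 1 x = x"
    and scaleR_scaleC: "scaleR r x = scaleC (complex_of_real r) x"
    and cinner_commute: "cinner x y = cnj (cinner y x)"
    and cinner_add_right: "cinner x (y + z) = cinner x y + cinner x z"
    and cinner_scaleC_right: "cinner x (scaleC a y) = a * cinner x y"
    and cinner_self_real: "Im (cinner x x) = 0"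
    and cinner_self_nonneg: "0 \<le> Re (cinner x x)"
    and cinner_self_zero: "cinner x x = 0 \<longleftrightarrow> x = 0"
    and norm_cinner: "norm x = sqrt (Re (cinner x x))"

definition bops :: "('a::chilbert_space \<Rightarrow> 'a) set" where
  "bops = {T. (\<forall>x y. T (x + y) = T x + T y) \<and> (\<forall>c x. T (scaleC c x) = scaleC c (T x))
              \<and> (\<exists>K. \<forall>x. norm (T x) \<le> K * norm x)}"

definition adj :: "('a::chilbert_space \<Rightarrow> 'a) \<Rightarrow> ('a \<Rightarrow> 'a)" where
  "adj T = (SOME S. S \<in> bops \<and> (\<forall>x y. cinner (T x) y = cinner x (S y)))"

definition is_bop_norm :: "(('a::chilbert_space \<Rightarrow> 'a) \<Rightarrow> real) \<Rightarrow> bool" where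
  "is_bop_norm N \<longleftrightarrow>
     (\<forall>T\<in>bops. 0 \<le> N T) \<and>
     (\<forall>T\<in>bops. N T = 0 \<longleftrightarrow> T = (\<lambda>x. 0)) \<and>
     (\<forall>T\<in>bops. \<forall>c. N (\<lambda>x. scaleC c (T x)) = cmod c * N T) \<and>
     (\<forall>T\<in>bops. \<forall>S\<in>bops. N (\<lambda>x. T x + S x) \<le> N T + N S)"

definition is_M_norm :: "(('a::chilbert_space \<Rightarrow> 'a) \<Rightarrow> real) \<Rightarrow> bool" where
  "is_M_norm N \<longleftrightarrow>
     (\<forall>(k::nat) (X::nat \<Rightarrow> 'a \<Rightarrow> 'a) (C::nat \<Rightarrow> 'a \<Rightarrow> 'a).
        k \<ge> 1 \<and> (\<forall>i<k. X i \<in> bops \<and> C i \<in> bops) \<and>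
        (\<forall>x. (\<Sum>i<k. adj (C i) (C i x)) = x) \<longrightarrow>
        N (\<lambda>x. \<Sum>i<k. adj (C i) (X i (C i x))) \<le> Max ((\<lambda>i. N (X i)) ` {..<k}))"

definition is_L_norm :: "(('a::chilbert_space \<Rightarrow> 'a) \<Rightarrow> real) \<Rightarrow> bool" where
  "is_L_norm N \<longleftrightarrow>
     (\<forall>(k::nat) (X::'a \<Rightarrow> 'a) (C::nat \<Rightarrow> 'a \<Rightarrow> 'a).
        X \<in> bops \<and> (\<forall>i<k. C i \<in> bops) \<and>
        (\<forall>x. (\<Sum>i<k. adj (C i) (C i x)) = x) \<longrightarrow>
        (\<Sum>i<k. N (\<lambda>x. C i (X (adj (C i) x)))) \<le> N X)"

end

theory Submission
  imports Defs
begin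

lemma sC_zero: "scaleC c (0::'a::chilbert_space) = 0"
proof -
  have "scaleC c ((0::'a) + 0) = scaleC c 0 + scaleC c 0" by (rule scaleC_add_right)
  thus ?thesis by simp
qed

lemma sC_minus: "scaleC c (- (x::'a::chilbert_space)) = - scaleC c x"
proof -
  have "scaleC c (x + - x) = scaleC c x + scaleC c (-x)" by (rule scaleC_add_right)
  hence "scaleC c x + scaleC c (-x) = 0" by (simp add: sC_zero)
  thus ?thesis by (rule add.inverse_unique[symmetric])
qed

lemma sC_diff: "scaleC c ((x::'a::chilbert_space) - y) = scaleC c x - scaleC c y"
proof -
  have "scaleC c (x + - y) = scaleC c x + scaleC c (- y)" by (rule scaleC_add_right)
  thus ?thesis by (simp add: sC_minus)
qed

lemma neg_sC: "- (x::'a::chilbert_space) = scaleC (-1) x"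
proof -
  have "scaleR (-1) x = scaleC (complex_of_real (-1)) x" by (rule scaleR_scaleC)
  thus ?thesis by simp
qed

lemma ci_zero: "cinner (x::'a::chilbert_space) 0 = 0"
proof -
  have "cinner x ((0::'a) + 0) = cinner x 0 + cinner x 0" by (rule cinner_add_right)
  thus ?thesis by simp
qed

lemma ci_diff: "cinner (x::'a::chilbert_space) (y - z) = cinner x y - cinner x z"
proof -
  have "cinner x ((y - z) + z) = cinner x (y - z) + cinner x z" by (rule cinner_add_right)
  thus ?thesis by simp
qed

lemma ci_diff_left: "cinner ((x::'a::chilbert_space) - y) z = cinner x z - cinner y z"
proof -
  have "cinner (x - y) z = cnj (cinner z (x - y))" by (rule cinner_commute)
  also have "\<dots> = cnj (cinner z x) - cnj (cinner z y)" by (simp add: ci_diff)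
  also have "cnj (cinner z x) = cinner x z" by (rule cinner_commute[symmetric])
  also have "cnj (cinner z y) = cinner y z" by (rule cinner_commute[symmetric])
  finally show ?thesis .
qed

lemma ci_uniq:
  assumes "\<And>x. cinner x a = cinner x (b::'a::chilbert_space)"
  shows "a = b"
proof -
  have "cinner (a - b) (a - b) = 0" using assms[of "a - b"] by (simp add: ci_diff)
  thus ?thesis using cinner_self_zero[of "a - b"] by simp
qed

lemma bops_lin: "T \<in> bops \<Longrightarrow> T (x + y) = T x + T y" by (simp add: bops_def)
lemma bops_sc: "T \<in> bops \<Longrightarrow> T (scaleC c x) = scaleC c (T x)" by (simp add: bops_def)

lemma bops_zero: "T \<in> bops \<Longrightarrow> T 0 = 0"
  using bops_lin[of T 0 0] by simp

lemma bops_minus: "T \<in> bops \<Longrightarrow> T (- x) = - T x"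
proof -
  assume T: "T \<in> bops"
  have "T (x + - x) = T x + T (- x)" using bops_lin[OF T] .
  hence "T x + T (- x) = 0" using bops_zero[OF T] by simp
  thus ?thesis by (rule add.inverse_unique[symmetric])
qed

lemma bops_comp:
  assumes "S \<in> bops" "T \<in> bops" shows "(\<lambda>x. S (T x)) \<in> bops"
proof -
  obtain K where K: "\<forall>x. norm (S x) \<le> K * norm x" using assms(1) by (auto simp: bops_def)
  obtain L where L: "\<forall>x. norm (T x) \<le> L * norm x" using assms(2) by (auto simp: bops_def)
  have "norm (S (T x)) \<le> (\<bar>K\<bar> * \<bar>L\<bar>) * norm x" for x
  proof -
    have "norm (S (T x)) \<le> K * norm (T x)" using K by blast
    also have "\<dots> \<le> \<bar>K\<bar> * norm (T x)" by (simp add: mult_right_mono)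
    also have "\<dots> \<le> \<bar>K\<bar> * (\<bar>L\<bar> * norm x)"
    proof (rule mult_left_mono)
      have "norm (T x) \<le> L * norm x" using L by blast
      also have "\<dots> \<le> \<bar>L\<bar> * norm x" by (simp add: mult_right_mono)
      finally show "norm (T x) \<le> \<bar>L\<bar> * norm x" .
    qed simp
    finally show ?thesis by simp
  qed
  thus ?thesis using assms by (auto simp: bops_def)
qed

lemma bops_id: "(\<lambda>x::'a::chilbert_space. x) \<in> bops"
  unfolding bops_def by (auto intro: exI[of _ 1])

lemma bops_zero_op: "(\<lambda>x::'a::chilbert_space. 0) \<in> bops"
  unfolding bops_def by (auto simp: sC_zero intro: exI[of _ 0])

lemma bops_neg:
  assumes "T \<in> bops" shows "(\<lambda>x. - T x) \<in> bops"
proof -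
  obtain K where K: "\<forall>x. norm (T x) \<le> K * norm x" using assms by (auto simp: bops_def)
  thus ?thesis using assms by (auto simp: bops_def sC_minus)
qed

lemma bops_IminusT:
  assumes "T \<in> bops" shows "(\<lambda>x. x - T x) \<in> bops"
proof -
  obtain K where K: "\<forall>x. norm (T x) \<le> K * norm x" using assms by (auto simp: bops_def)
  have "norm (x - T x) \<le> (1 + K) * norm x" for x
  proof -
    have "norm (x - T x) \<le> norm x + norm (T x)" by (rule norm_triangle_ineq4)
    also have "\<dots> \<le> norm x + K * norm x" using K by simp
    finally show ?thesis by (simp add: distrib_right)
  qed
  thus ?thesis using assms by (auto simp: bops_def sC_diff)
qed

lemma adj_prop:
  assumes "S \<in> bops" "\<forall>x y. cinner (T x) y = cinner x (S y)"
  shows "\<forall>x y. cinner (T x) y = cinner x (adj T y)"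
proof -
  have "adj T \<in> bops \<and> (\<forall>x y. cinner (T x) y = cinner x (adj T y))"
    unfolding adj_def by (rule someI[of _ S]) (use assms in blast)
  thus ?thesis by blast
qed

lemma adj_eq:
  assumes "S \<in> bops" "\<forall>x y. cinner (T x) y = cinner x (S y)"
  shows "adj T y = S y"
proof (rule ci_uniq[symmetric])
  fix x
  have "cinner x (adj T y) = cinner (T x) y" using adj_prop[OF assms] by simp
  also have "\<dots> = cinner x (S y)" using assms(2) by simp
  finally show "cinner x (S y) = cinner x (adj T y)" by simp
qed

lemma bops_diff: "T \<in> bops \<Longrightarrow> T (x - y) = T x - T y"
  using bops_lin[of T x "- y"] bops_minus[of T y] by simp

lemma ci_neg: "cinner (x::'a::chilbert_space) (- y) = - cinner x y"
  using ci_diff[of x 0 y] by (simp add: ci_zero)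

lemma ci_neg_left: "cinner (- (x::'a::chilbert_space)) y = - cinner x y"
proof -
  have "cinner (- x) y = cnj (cinner y (- x))" by (rule cinner_commute)
  also have "\<dots> = - cnj (cinner y x)" by (simp add: ci_neg)
  also have "cnj (cinner y x) = cinner x y" by (rule cinner_commute[symmetric])
  finally show ?thesis .
qed

lemma adj_none:
  assumes "\<not> (\<exists>S. S \<in> bops \<and> (\<forall>x y. cinner (T x) y = cinner x (S y)))"
  shows "adj (\<lambda>x. - T x) = adj T"
proof -
  have h0: "\<not> (S \<in> bops \<and> (\<forall>x y. cinner (- T x) y = cinner x (S y)))" for S
  proof
    assume h: "S \<in> bops \<and> (\<forall>x y. cinner (- T x) y = cinner x (S y))"
    have "(\<lambda>y. - S y) \<in> bops" using h bops_neg by blast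
    moreover have "\<forall>x y. cinner (T x) y = cinner x (- S y)"
    proof (intro allI)
      fix x y
      have "cinner (- T x) y = cinner x (S y)" using h by blast
      hence "- cinner (T x) y = cinner x (S y)" by (simp add: ci_neg_left)
      hence "cinner (T x) y = - cinner x (S y)" by (metis minus_minus)
      thus "cinner (T x) y = cinner x (- S y)" by (simp add: ci_neg)
    qed
    ultimately show False using assms by blast
  qed
  have "(\<lambda>S. S \<in> bops \<and> (\<forall>x y. cinner (- T x) y = cinner x (S y)))
       = (\<lambda>S. S \<in> bops \<and> (\<forall>x y. cinner (T x) y = cinner x (S y)))"
    by (rule ext) (use assms h0 in blast)
  thus ?thesis unfolding adj_def by simp
qed

lemma adj_id: "adj (\<lambda>x::'a::chilbert_space. x) y = y"
  using adj_eq[of "\<lambda>x. x" "\<lambda>x. x"] bops_id by simp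

lemma M_use:
  fixes k :: nat
  assumes "is_M_norm N" "k \<ge> 1" "\<forall>i<k. X i \<in> bops \<and> C i \<in> bops"
    "\<forall>x. (\<Sum>i<k. adj (C i) (C i x)) = x"
  shows "N (\<lambda>x. \<Sum>i<k. adj (C i) (X i (C i x))) \<le> Max ((\<lambda>i. N (X i)) ` {..<k})"
  using assms unfolding is_M_norm_def by blast

lemma L_use:
  fixes k :: nat
  assumes "is_L_norm N" "X \<in> bops" "\<forall>i<k. C i \<in> bops"
    "\<forall>x. (\<Sum>i<k. adj (C i) (C i x)) = x"
  shows "(\<Sum>i<k. N (\<lambda>x. C i (X (adj (C i) x)))) \<le> N X"
  using assms unfolding is_L_norm_def by blast

lemma bn1: "is_bop_norm N \<Longrightarrow> T \<in> bops \<Longrightarrow> 0 \<le> N T"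
  unfolding is_bop_norm_def by (elim conjE) (erule bspec)
lemma bn2: "is_bop_norm N \<Longrightarrow> N (\<lambda>x. 0) = 0"
  unfolding is_bop_norm_def using bops_zero_op by (elim conjE) (drule bspec, assumption, simp)
lemma bn3: "is_bop_norm N \<Longrightarrow> T \<in> bops \<Longrightarrow> N (\<lambda>x. scaleC c (T x)) = cmod c * N T"
  unfolding is_bop_norm_def by (elim conjE) (drule bspec, assumption, erule allE, assumption)

theorem lemma2p8:
  fixes N :: "('a::chilbert_space \<Rightarrow> 'a) \<Rightarrow> real"
    and E A :: "'a \<Rightarrow> 'a"
  assumes "is_bop_norm N"
    and "is_L_norm N \<or> is_M_norm N"
    and "E \<in> bops" and "E \<circ> E = E" and "adj E = E"
    and "A \<in> bops"
  shows "N (E \<circ> A \<circ> E) \<le> N A"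
proof -
  have EE: "E (E x) = E x" for x using fun_cong[OF assms(4), of x] by simp
  have N0: "N (\<lambda>x. 0) = 0" using bn2[OF assms(1)] .
  have Nnn: "T \<in> bops \<Longrightarrow> 0 \<le> N T" for T using bn1[OF assms(1)] by blast
  have EAE: "(\<lambda>x. E (A (E x))) \<in> bops" using bops_comp assms(3,6) by blast
  have EAEeq: "E \<circ> A \<circ> E = (\<lambda>x. E (A (E x)))" by auto
  have NA: "0 \<le> N A" using Nnn assms(6) by blast
  show ?thesis
  proof (cases "\<exists>S. S \<in> bops \<and> (\<forall>x y. cinner (E x) y = cinner x (S y))")
    case True
    then obtain S where S: "S \<in> bops" "\<forall>x y. cinner (E x) y = cinner x (S y)" by blast
    have symE: "\<forall>x y. cinner (E x) y = cinner x (E y)" using adj_prop[OF S] assms(5) by simp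
    define F where "F = (\<lambda>x. x - E x)"
    have Fb: "F \<in> bops" unfolding F_def using bops_IminusT assms(3) by blast
    have symF: "\<forall>x y. cinner (F x) y = cinner x (F y)"
      unfolding F_def using symE by (simp add: ci_diff ci_diff_left)
    have adjF: "adj F y = F y" for y using adj_eq[OF Fb symF] .
    define C where "C = (\<lambda>i::nat. if i = 0 then E else F)"
    have Cb: "\<forall>i<2. C i \<in> bops" using Fb assms(3) by (simp add: C_def)
    have F0: "F 0 = 0" using Fb bops_zero by blast
    have sumI: "\<forall>x. (\<Sum>i<2. adj (C i) (C i x)) = x"
      by (simp add: C_def numeral_2_eq_2 assms(5) adjF) (simp add: EE F_def bops_diff[OF assms(3)])
    from assms(2) show ?thesis
    proof
      assume L: "is_L_norm N"
      have "(\<Sum>i<2. N (\<lambda>x. C i (A (adj (C i) x)))) \<le> N A"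
        by (rule L_use[OF L assms(6) Cb sumI])
      hence "N (\<lambda>x. E (A (E x))) + N (\<lambda>x. F (A (F x))) \<le> N A"
        by (simp add: C_def numeral_2_eq_2 assms(5) adjF)
      moreover have "0 \<le> N (\<lambda>x. F (A (F x)))"
        using Nnn bops_comp Fb assms(6) by blast
      ultimately show ?thesis using EAEeq by simp
    next
      assume M: "is_M_norm N"
      define X where "X = (\<lambda>i::nat. if i = 0 then A else (\<lambda>x. 0))"
      have Xb: "\<forall>i<2. X i \<in> bops \<and> C i \<in> bops" using Cb assms(6) bops_zero_op by (auto simp add: X_def)
      have "N (\<lambda>x. \<Sum>i<2. adj (C i) (X i (C i x))) \<le> Max ((\<lambda>i. N (X i)) ` {..<2})"
        by (rule M_use[OF M _ Xb sumI]) simp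
      moreover have "(\<lambda>x. \<Sum>i<2. adj (C i) (X i (C i x))) = (\<lambda>x. E (A (E x)))"
        by (simp add: C_def X_def numeral_2_eq_2 assms(5) adjF F0)
      moreover have "(\<lambda>i. N (X i)) ` {..<2} = {N A, 0}"
        by (auto simp: X_def numeral_2_eq_2 lessThan_Suc N0)
      ultimately show ?thesis using EAEeq NA by (simp add: max_def)
    qed
  next
    case False
    have adjm: "adj (\<lambda>x. - E x) = E" using adj_none[OF False] assms(5) by simp
    define C where "C = (\<lambda>i::nat. if i = 0 then E else if i = 1 then (\<lambda>x. - E x) else (\<lambda>x. x))"
    have Cb: "\<forall>i<3. C i \<in> bops" using assms(3) bops_neg[OF assms(3)] bops_id by (auto simp add: C_def)
    have sumI: "\<forall>x. (\<Sum>i<3. adj (C i) (C i x)) = x"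
      by (simp add: C_def numeral_3_eq_3 assms(5) adjm adj_id EE bops_minus[OF assms(3)])
    from assms(2) show ?thesis
    proof
      assume L: "is_L_norm N"
      have "(\<Sum>i<3. N (\<lambda>x. C i (A (adj (C i) x)))) \<le> N A"
        by (rule L_use[OF L assms(6) Cb sumI])
      hence "N (\<lambda>x. E (A (E x))) + N (\<lambda>x. - E (A (E x))) + N (\<lambda>x. A x) \<le> N A"
        by (simp add: C_def numeral_3_eq_3 assms(5) adjm adj_id)
      moreover have "N (\<lambda>x. - E (A (E x))) = N (\<lambda>x. E (A (E x)))"
      proof -
        have "N (\<lambda>x. scaleC (-1) (E (A (E x)))) = cmod (-1) * N (\<lambda>x. E (A (E x)))"
          using bn3[OF assms(1) EAE, of "-1"] .
        thus ?thesis by (simp add: neg_sC)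
      qed
      moreover have "0 \<le> N (\<lambda>x. E (A (E x)))" using Nnn EAE by blast
      ultimately show ?thesis using EAEeq NA by simp
    next
      assume M: "is_M_norm N"
      define X where "X = (\<lambda>i::nat. if i = 0 then A else (\<lambda>x. 0))"
      have Xb: "\<forall>i<3. X i \<in> bops \<and> C i \<in> bops" using Cb assms(6) bops_zero_op by (auto simp add: X_def)
      have "N (\<lambda>x. \<Sum>i<3. adj (C i) (X i (C i x))) \<le> Max ((\<lambda>i. N (X i)) ` {..<3})"
        by (rule M_use[OF M _ Xb sumI]) simp
      moreover have "(\<lambda>x. \<Sum>i<3. adj (C i) (X i (C i x))) = (\<lambda>x. E (A (E x)))"
        by (simp add: C_def X_def numeral_3_eq_3 assms(5) adjm adj_id bops_zero[OF assms(3)])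
      moreover have "(\<lambda>i. N (X i)) ` {..<3} = {N A, 0}"
        by (auto simp: X_def numeral_3_eq_3 lessThan_Suc N0)
      ultimately show ?thesis using EAEeq NA by (simp add: max_def)
    qed
  qed
qed

end
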